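(* Let $(X,\mathcal{A},\mu)$ be a probability space, $\theta$ a measure-preserving endomorphism of it, $\varphi$ a ceiling function, and $(\overline{X},\overline{\mu},(\Phi_t)_{t\ge 0})$ the special flow with base transformation $\theta$ and ceiling function $\varphi$. Let $\overline{A},\overline{B}\subset\overline{X}$ be holes. Then (each relation being asserted whenever the escape rates appearing in it exist): (1) If $\overline{A}\subset\overline{B}$, then $\rho(\overline{A},\varphi)\le\rho(\overline{B},\varphi)$. (2) For all $r\ge 0$, $\rho(\overline{A},\varphi)=\rho(\Phi_r^{-1}(\overline{A}),\varphi)$. (3) For all $r\ge 0$, $\rho(\overline{A},\varphi)=\rho\big(\bigcup_{\tau\in[0,r]}\Phi_\tau^{-1}(\overline{A}),\varphi\big)$. (4) If $\varphi$ is bounded and $\pi_1(\overline{A})$ is measurable, then $\rho(\pi_1^{-1}(\pi_1(\overline{A})),\varphi)=\rho(\overline{A},\varphi)$.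
   Context: A ceiling function is a measurable $\varphi:X\to\mathbb{R}$ with $\inf_{x\in X}\varphi(x)>0$. Write $S_n\varphi=\sum_{k=0}^{n-1}\varphi\circ\theta^k$ and $N_t^\varphi(x)=\min\{n\in\mathbb{N}_0: S_n\varphi(x)>t\}$ for $t\ge0$. The special flow: $\overline{X}=\{(x,s)\in X\times\mathbb{R}:0\le s<\varphi(x)\}$ with the restriction $\overline{\mu}$ of the product of $\mu$ with Lebesgue measure, and $\Phi_t(x,s)=(x,s+t)$ if $0\le t<\varphi(x)-s$, and $\Phi_t(x,s)=(\theta^{N-1}x,\,s+t-S_{N-1}\varphi(x))$ with $N=N^\varphi_{s+t}(x)$ if $t\ge\varphi(x)-s$. $\pi_1:\overline{X}\to X$ is the projection to the first coordinate. A hole is a measurable $\overline{A}\subset\overline{X}$ with $\bigcup_{t\ge0}\Phi_t^{-1}(\overline{A})=\overline{X}$ up to a $\overline{\mu}$-null set and such that $\bigcup_{t\in[0,\tau]}\Phi_t^{-1}(\overline{A})$ is measurable for every $\tau\ge0$. The upper/lower escape rates are $\limsup_{t\to\infty}$ resp. $\liminf_{t\to\infty}$ of $-\frac1t\log\overline{\mu}(\{(x,s)\in\overline{X}:\forall\tau\in[0,t]:\Phi_\tau(x,s)\notin\overline{A}\})$; if they coincide, the common value is the escape rate $\rho(\overline{A},\varphi)$. *)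

theory Defs
  imports "HOL-Probability.Probability"
begin

definition mp_endo :: "'a measure \<Rightarrow> ('a \<Rightarrow> 'a) \<Rightarrow> bool" where
  "mp_endo M \<theta> \<longleftrightarrow> \<theta> \<in> measurable M M \<and> distr M M \<theta> = M"

definition ceiling_fun :: "'a measure \<Rightarrow> ('a \<Rightarrow> real) \<Rightarrow> bool" where
  "ceiling_fun M \<phi> \<longleftrightarrow> \<phi> \<in> borel_measurable M \<and> (\<exists>c>0. \<forall>x\<in>space M. c \<le> \<phi> x)"

definition bsum :: "('a \<Rightarrow> 'a) \<Rightarrow> ('a \<Rightarrow> real) \<Rightarrow> nat \<Rightarrow> 'a \<Rightarrow> real" where
  "bsum \<theta> \<phi> n x = (\<Sum>k<n. \<phi> ((\<theta> ^^ k) x))"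

definition Nt :: "('a \<Rightarrow> 'a) \<Rightarrow> ('a \<Rightarrow> real) \<Rightarrow> real \<Rightarrow> 'a \<Rightarrow> nat" where
  "Nt \<theta> \<phi> t x = (LEAST n. bsum \<theta> \<phi> n x > t)"

definition sf_space :: "'a measure \<Rightarrow> ('a \<Rightarrow> real) \<Rightarrow> ('a \<times> real) set" where
  "sf_space M \<phi> = {(x, s). x \<in> space M \<and> 0 \<le> s \<and> s < \<phi> x}"

definition sf_measure :: "'a measure \<Rightarrow> ('a \<Rightarrow> real) \<Rightarrow> ('a \<times> real) measure" where
  "sf_measure M \<phi> = restrict_space (M \<Otimes>\<^sub>M lborel) (sf_space M \<phi>)"

definition sf_flow :: "('a \<Rightarrow> 'a) \<Rightarrow> ('a \<Rightarrow> real) \<Rightarrow> real \<Rightarrow> 'a \<times> real \<Rightarrow> 'a \<times> real" where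
  "sf_flow \<theta> \<phi> t p = (case p of (x, s) \<Rightarrow>
     if t < \<phi> x - s then (x, s + t)
     else (let N = Nt \<theta> \<phi> (s + t) x in
           ((\<theta> ^^ (N - 1)) x, s + t - bsum \<theta> \<phi> (N - 1) x)))"

definition sf_preimage :: "'a measure \<Rightarrow> ('a \<Rightarrow> 'a) \<Rightarrow> ('a \<Rightarrow> real) \<Rightarrow> real
    \<Rightarrow> ('a \<times> real) set \<Rightarrow> ('a \<times> real) set" where
  "sf_preimage M \<theta> \<phi> t A = {p \<in> sf_space M \<phi>. sf_flow \<theta> \<phi> t p \<in> A}"

definition sf_hit_before :: "'a measure \<Rightarrow> ('a \<Rightarrow> 'a) \<Rightarrow> ('a \<Rightarrow> real) \<Rightarrow> real
    \<Rightarrow> ('a \<times> real) set \<Rightarrow> ('a \<times> real) set" where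
  "sf_hit_before M \<theta> \<phi> r A = (\<Union>\<tau>\<in>{0..r}. sf_preimage M \<theta> \<phi> \<tau> A)"

definition is_hole :: "'a measure \<Rightarrow> ('a \<Rightarrow> 'a) \<Rightarrow> ('a \<Rightarrow> real) \<Rightarrow> ('a \<times> real) set \<Rightarrow> bool" where
  "is_hole M \<theta> \<phi> A \<longleftrightarrow>
     A \<in> sets (sf_measure M \<phi>) \<and>
     (\<exists>Z \<in> null_sets (sf_measure M \<phi>).
        sf_space M \<phi> - (\<Union>t\<in>{0..}. sf_preimage M \<theta> \<phi> t A) \<subseteq> Z) \<and>
     (\<forall>\<tau>\<ge>0. sf_hit_before M \<theta> \<phi> \<tau> A \<in> sets (sf_measure M \<phi>))"

definition survivors :: "'a measure \<Rightarrow> ('a \<Rightarrow> 'a) \<Rightarrow> ('a \<Rightarrow> real) \<Rightarrow> ('a \<times> real) set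
    \<Rightarrow> real \<Rightarrow> ('a \<times> real) set" where
  "survivors M \<theta> \<phi> A t = {p \<in> sf_space M \<phi>. \<forall>\<tau>\<in>{0..t}. sf_flow \<theta> \<phi> \<tau> p \<notin> A}"

definition eln :: "ennreal \<Rightarrow> ereal" where
  "eln x = (if x = 0 then - \<infinity> else if x = \<top> then \<infinity> else ereal (ln (enn2real x)))"

definition esc_fun :: "'a measure \<Rightarrow> ('a \<Rightarrow> 'a) \<Rightarrow> ('a \<Rightarrow> real) \<Rightarrow> ('a \<times> real) set
    \<Rightarrow> real \<Rightarrow> ereal" where
  "esc_fun M \<theta> \<phi> A t = - eln (emeasure (sf_measure M \<phi>) (survivors M \<theta> \<phi> A t)) / ereal t"

definition upper_esc :: "'a measure \<Rightarrow> ('a \<Rightarrow> 'a) \<Rightarrow> ('a \<Rightarrow> real) \<Rightarrow> ('a \<times> real) set \<Rightarrow> ereal" where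
  "upper_esc M \<theta> \<phi> A = Limsup at_top (esc_fun M \<theta> \<phi> A)"

definition lower_esc :: "'a measure \<Rightarrow> ('a \<Rightarrow> 'a) \<Rightarrow> ('a \<Rightarrow> real) \<Rightarrow> ('a \<times> real) set \<Rightarrow> ereal" where
  "lower_esc M \<theta> \<phi> A = Liminf at_top (esc_fun M \<theta> \<phi> A)"

definition esc_exists :: "'a measure \<Rightarrow> ('a \<Rightarrow> 'a) \<Rightarrow> ('a \<Rightarrow> real) \<Rightarrow> ('a \<times> real) set \<Rightarrow> bool" where
  "esc_exists M \<theta> \<phi> A \<longleftrightarrow> upper_esc M \<theta> \<phi> A = lower_esc M \<theta> \<phi> A"

definition esc_rate :: "'a measure \<Rightarrow> ('a \<Rightarrow> 'a) \<Rightarrow> ('a \<Rightarrow> real) \<Rightarrow> ('a \<times> real) set \<Rightarrow> ereal" where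
  "esc_rate M \<theta> \<phi> A = upper_esc M \<theta> \<phi> A"

end

theory Submission
  imports Defs
begin


locale SF =
  fixes M :: "'a measure" and \<theta> :: "'a \<Rightarrow> 'a" and \<phi> :: "'a \<Rightarrow> real" and c :: real
  assumes th_meas[measurable]: "\<theta> \<in> measurable M M"
    and phi_meas[measurable]: "\<phi> \<in> borel_measurable M"
    and c_pos: "c > 0" and c_le: "\<And>x. x \<in> space M \<Longrightarrow> c \<le> \<phi> x"
    and distr_eq: "distr M M \<theta> = M"
begin

lemma it_space: "x \<in> space M \<Longrightarrow> (\<theta>^^n) x \<in> space M"
  by (induct n) (auto intro: measurable_space[OF th_meas])

lemma bsum_Suc: "bsum \<theta> \<phi> (Suc n) x = bsum \<theta> \<phi> n x + \<phi> ((\<theta>^^n) x)"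
  by (simp add: bsum_def)

lemma bsum_0[simp]: "bsum \<theta> \<phi> 0 x = 0" by (simp add: bsum_def)

lemma bsum_1: "bsum \<theta> \<phi> (Suc 0) x = \<phi> x" by (simp add: bsum_def)

lemma bsum_strict: "x \<in> space M \<Longrightarrow> m < n \<Longrightarrow> bsum \<theta> \<phi> m x < bsum \<theta> \<phi> n x"
proof (induct n)
  case 0 then show ?case by simp
next
  case (Suc n)
  have "\<phi> ((\<theta>^^n) x) > 0" using c_le[OF it_space[OF Suc.prems(1), of n]] c_pos by linarith
  then show ?case using Suc by (cases "m = n") (auto simp: bsum_Suc)
qed

lemma bsum_mono: "x \<in> space M \<Longrightarrow> m \<le> n \<Longrightarrow> bsum \<theta> \<phi> m x \<le> bsum \<theta> \<phi> n x"
  using bsum_strict[of x m n] by (cases "m = n") auto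

lemma bsum_ge: "x \<in> space M \<Longrightarrow> real n * c \<le> bsum \<theta> \<phi> n x"
proof (induct n)
  case (Suc n) then show ?case using c_le[OF it_space[OF Suc.prems, of n]]
    by (simp add: bsum_Suc algebra_simps)
qed simp

lemma bsum_add: "bsum \<theta> \<phi> (n + m) x = bsum \<theta> \<phi> n x + bsum \<theta> \<phi> m ((\<theta>^^n) x)"
  by (induct m) (auto simp: bsum_Suc, metis add.commute comp_apply funpow_add)

lemma bsum_meas[measurable]: "bsum \<theta> \<phi> n \<in> borel_measurable M"
  unfolding bsum_def by measurable

lemma Nt_eq:
  assumes x: "x \<in> space M" and "bsum \<theta> \<phi> n x \<le> v" "v < bsum \<theta> \<phi> (Suc n) x"
  shows "Nt \<theta> \<phi> v x = Suc n"
  unfolding Nt_def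
proof (rule Least_equality)
  fix m assume "v < bsum \<theta> \<phi> m x"
  then show "Suc n \<le> m" using bsum_mono[OF x, of m n] assms by (cases "Suc n \<le> m") auto
qed (use assms in auto)

lemma CHAR:
  assumes x: "x \<in> space M" and s: "0 \<le> s" and "bsum \<theta> \<phi> n x \<le> s + t" "s + t < bsum \<theta> \<phi> (Suc n) x"
  shows "sf_flow \<theta> \<phi> t (x, s) = ((\<theta>^^n) x, s + t - bsum \<theta> \<phi> n x)"
proof (cases "t < \<phi> x - s")
  case True
  then have "s + t < bsum \<theta> \<phi> (Suc 0) x" by (simp add: bsum_1)
  then have "n = 0" using bsum_mono[OF x, of "Suc 0" n] assms by (cases n) auto
  then show ?thesis using True by (simp add: sf_flow_def)
next
  case False
  then show ?thesis using Nt_eq[OF x assms(3,4)] by (simp add: sf_flow_def Let_def)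
qed

lemma EX:
  assumes x: "x \<in> space M" and v: "0 \<le> v"
  shows "\<exists>n. bsum \<theta> \<phi> n x \<le> v \<and> v < bsum \<theta> \<phi> (Suc n) x"
proof -
  obtain m :: nat where m: "v / c < real m" using reals_Archimedean2 by blast
  then have "v < real m * c" using c_pos by (simp add: field_simps)
  then have ex: "\<exists>m. v < bsum \<theta> \<phi> m x" using bsum_ge[OF x, of m] by (intro exI[of _ m]) linarith
  define k where "k = (LEAST m. v < bsum \<theta> \<phi> m x)"
  have k: "v < bsum \<theta> \<phi> k x" unfolding k_def by (rule LeastI_ex[OF ex])
  have "k \<noteq> 0" using k v by (cases "k = 0") auto
  then obtain n where kn: "k = Suc n" by (cases k) auto
  have "\<not> v < bsum \<theta> \<phi> n x" using not_less_Least[of n "\<lambda>m. v < bsum \<theta> \<phi> m x"] kn k_def by auto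
  then show ?thesis using k kn by (intro exI[of _ n]) (auto simp: not_less)
qed

definition "\<Omega> = sf_space M \<phi>"

lemma flow_in:
  assumes p: "p \<in> \<Omega>" and t: "0 \<le> t"
  shows "sf_flow \<theta> \<phi> t p \<in> \<Omega>"
proof -
  obtain x s where ps: "p = (x, s)" and x: "x \<in> space M" and s: "0 \<le> s" "s < \<phi> x"
    using p by (auto simp: \<Omega>_def sf_space_def)
  obtain n where n: "bsum \<theta> \<phi> n x \<le> s + t" "s + t < bsum \<theta> \<phi> (Suc n) x" using EX[OF x, of "s+t"] s t by auto
  show ?thesis using CHAR[OF x s(1) n] n it_space[OF x, of n]
    by (auto simp: ps \<Omega>_def sf_space_def bsum_Suc)
qed

lemma flow_add:
  assumes p: "p \<in> \<Omega>" and a: "0 \<le> a" and b: "0 \<le> b"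
  shows "sf_flow \<theta> \<phi> (a + b) p = sf_flow \<theta> \<phi> b (sf_flow \<theta> \<phi> a p)"
proof -
  obtain x s where ps: "p = (x, s)" and x: "x \<in> space M" and s: "0 \<le> s" "s < \<phi> x"
    using p by (auto simp: \<Omega>_def sf_space_def)
  obtain n where n: "bsum \<theta> \<phi> n x \<le> s + a" "s + a < bsum \<theta> \<phi> (Suc n) x" using EX[OF x, of "s+a"] s a by auto
  define y where "y = (\<theta>^^n) x"
  define u where "u = s + a - bsum \<theta> \<phi> n x"
  have y: "y \<in> space M" using it_space[OF x] y_def by auto
  have u: "0 \<le> u" using n u_def by auto
  obtain m where m: "bsum \<theta> \<phi> m y \<le> u + b" "u + b < bsum \<theta> \<phi> (Suc m) y" using EX[OF y, of "u+b"] u b by auto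
  have 1: "sf_flow \<theta> \<phi> a p = (y, u)" using CHAR[OF x s(1) n] by (simp add: ps y_def u_def)
  have 2: "sf_flow \<theta> \<phi> b (y, u) = ((\<theta>^^m) y, u + b - bsum \<theta> \<phi> m y)" using CHAR[OF y u m] .
  have e1: "bsum \<theta> \<phi> (n + m) x = bsum \<theta> \<phi> n x + bsum \<theta> \<phi> m y" using bsum_add y_def by simp
  have e2: "bsum \<theta> \<phi> (Suc (n + m)) x = bsum \<theta> \<phi> n x + bsum \<theta> \<phi> (Suc m) y" using bsum_add[of "n" "Suc m"] y_def by simp
  have 3: "sf_flow \<theta> \<phi> (a + b) p = ((\<theta>^^(n+m)) x, s + (a + b) - bsum \<theta> \<phi> (n+m) x)"
    unfolding ps by (rule CHAR[OF x s(1)]) (use m e1 e2 u_def in auto)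
  show ?thesis using 1 2 3 e1 by (simp add: y_def u_def funpow_add algebra_simps)
qed


abbreviation "N \<equiv> M \<Otimes>\<^sub>M lborel"

definition g :: "real \<Rightarrow> 'a \<times> real \<Rightarrow> 'a \<times> real" where
  "g t p = (if snd p + t < \<phi> (fst p) then (fst p, snd p + t) else (\<theta> (fst p), snd p + t - \<phi> (fst p)))"

lemma flow_small:
  assumes p: "p \<in> \<Omega>" and t: "0 \<le> t" "t < c"
  shows "sf_flow \<theta> \<phi> t p = g t p"
proof -
  obtain x s where ps: "p = (x, s)" and x: "x \<in> space M" and s: "0 \<le> s" "s < \<phi> x"
    using p by (auto simp: \<Omega>_def sf_space_def)
  show ?thesis
  proof (cases "s + t < \<phi> x")
    case True
    then show ?thesis using CHAR[OF x s(1), of 0 t] s t by (simp add: ps g_def bsum_1)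
  next
    case False
    have "c \<le> \<phi> (\<theta> x)" using c_le measurable_space[OF th_meas x] by auto
    then have "s + t < bsum \<theta> \<phi> (Suc (Suc 0)) x" using s t by (simp add: bsum_Suc bsum_1)
    then show ?thesis using CHAR[OF x s(1), of 1 t] s t False by (simp add: ps g_def bsum_1)
  qed
qed

lemma Omega_sets: "\<Omega> \<in> sets N"
proof -
  have "\<Omega> = {p \<in> space N. 0 \<le> snd p \<and> snd p < \<phi> (fst p)}"
    by (auto simp: \<Omega>_def sf_space_def space_pair_measure)
  also have "\<dots> \<in> sets N" by measurable
  finally show ?thesis .
qed

lemma g_meas: "g t \<in> measurable N N"
  unfolding g_def by measurable

lemma shift_sets: "B \<in> sets borel \<Longrightarrow> (\<lambda>s::real. a + s) -` B \<in> sets borel"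
  using measurable_sets[of "\<lambda>s::real. a + s" borel borel B] by auto

lemma lborel_shift: "B \<in> sets borel \<Longrightarrow> emeasure lborel ((\<lambda>s::real. a + s) -` B) = emeasure lborel B"
proof -
  assume B: "B \<in> sets borel"
  have "emeasure lborel B = emeasure (distr lborel borel ((+) a)) B" by (simp add: lborel_distr_plus)
  also have "\<dots> = emeasure lborel ((+) a -` B)" using B by (subst emeasure_distr) auto
  finally show ?thesis by simp
qed

lemma small_inv:
  assumes E: "E \<in> sets N" "E \<subseteq> \<Omega>" and t: "0 \<le> t" "t < c"
  shows "{p \<in> \<Omega>. sf_flow \<theta> \<phi> t p \<in> E} \<in> sets N \<and>
         emeasure N {p \<in> \<Omega>. sf_flow \<theta> \<phi> t p \<in> E} = emeasure N E"
proof -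
  define F where "F = {p \<in> \<Omega>. g t p \<in> E}"
  have FF: "{p \<in> \<Omega>. sf_flow \<theta> \<phi> t p \<in> E} = F" using flow_small[OF _ t] by (auto simp: F_def)
  have F_eq: "F = \<Omega> \<inter> (g t -` E \<inter> space N)"
    using sets.sets_into_space[OF Omega_sets] by (auto simp: F_def)
  have Fs: "F \<in> sets N" unfolding F_eq using Omega_sets measurable_sets[OF g_meas E(1)] by auto
  define E1 where "E1 = E \<inter> (space M \<times> {t..})"
  define E2 where "E2 = E \<inter> (space M \<times> {..<t})"
  have E1s: "E1 \<in> sets N" unfolding E1_def using E(1) by (intro sets.Int pair_measureI) auto
  have E2s: "E2 \<in> sets N" unfolding E2_def using E(1) by (intro sets.Int pair_measureI) auto
  define h1 where "h1 x = emeasure lborel (Pair x -` E1)" for x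
  define h2 where "h2 x = emeasure lborel (Pair x -` E2)" for x
  have h1m: "h1 \<in> borel_measurable M" unfolding h1_def by (rule lborel.measurable_emeasure_Pair[OF E1s])
  have h2m: "h2 \<in> borel_measurable M" unfolding h2_def by (rule lborel.measurable_emeasure_Pair[OF E2s])
  have sec: "emeasure lborel (Pair x -` F) = h1 x + h2 (\<theta> x)" if x: "x \<in> space M" for x
  proof -
    have tx: "\<theta> x \<in> space M" using measurable_space[OF th_meas x] .
    have cx: "t < \<phi> x" using c_le[OF x] t by linarith
    have Ein: "\<And>y v. (y, v) \<in> E \<Longrightarrow> y \<in> space M \<and> 0 \<le> v \<and> v < \<phi> y"
      using E(2) by (auto simp: \<Omega>_def sf_space_def)
    have "Pair x -` F = (\<lambda>s. t + s) -` (Pair x -` E1) \<union> (\<lambda>s. (t - \<phi> x) + s) -` (Pair (\<theta> x) -` E2)"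
      (is "_ = ?P1 \<union> ?P2")
    proof (intro set_eqI iffI)
      fix s assume "s \<in> Pair x -` F"
      then have s: "0 \<le> s" "s < \<phi> x" "g t (x, s) \<in> E" by (auto simp: F_def \<Omega>_def sf_space_def)
      show "s \<in> ?P1 \<union> ?P2"
      proof (cases "s + t < \<phi> x")
        case True
        then show ?thesis using s x by (auto simp: g_def E1_def add.commute)
      next
        case False
        then show ?thesis using s tx by (auto simp: g_def E2_def algebra_simps)
      qed
    next
      fix s assume "s \<in> ?P1 \<union> ?P2"
      then show "s \<in> Pair x -` F"
      proof
        assume "s \<in> ?P1"
        then have "(x, t + s) \<in> E" "t \<le> t + s" by (auto simp: E1_def split: if_splits)
        then show ?thesis using Ein[of x "t+s"] x t by (auto simp: F_def \<Omega>_def sf_space_def g_def add.commute)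
      next
        assume "s \<in> ?P2"
        then have "(\<theta> x, t - \<phi> x + s) \<in> E" "t - \<phi> x + s < t" by (auto simp: E2_def split: if_splits)
        then show ?thesis using Ein[of "\<theta> x" "t - \<phi> x + s"] x cx
          by (auto simp: F_def \<Omega>_def sf_space_def g_def algebra_simps)
      qed
    qed
    moreover have "?P1 \<inter> ?P2 = {}"
      using cx by (auto simp: E1_def E2_def split: if_splits dest!: Ein)
    moreover have "?P1 \<in> sets lborel" "?P2 \<in> sets lborel"
      using sets_Pair1[OF E1s, of x] sets_Pair1[OF E2s, of "\<theta> x"] by (auto intro: shift_sets)
    ultimately have "emeasure lborel (Pair x -` F) = emeasure lborel ?P1 + emeasure lborel ?P2"
      by (simp add: plus_emeasure)
    also have "\<dots> = h1 x + h2 (\<theta> x)" unfolding h1_def h2_def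
      using sets_Pair1[OF E1s, of x] sets_Pair1[OF E2s, of "\<theta> x"] by (simp add: lborel_shift)
    finally show ?thesis .
  qed
  have "emeasure N F = (\<integral>\<^sup>+x. emeasure lborel (Pair x -` F) \<partial>M)"
    by (rule lborel.emeasure_pair_measure_alt[OF Fs])
  also have "\<dots> = (\<integral>\<^sup>+x. h1 x + h2 (\<theta> x) \<partial>M)" by (rule nn_integral_cong) (simp add: sec)
  also have "\<dots> = (\<integral>\<^sup>+x. h1 x \<partial>M) + (\<integral>\<^sup>+x. h2 (\<theta> x) \<partial>M)"
    by (rule nn_integral_add) (use h1m h2m in measurable)
  also have "(\<integral>\<^sup>+x. h2 (\<theta> x) \<partial>M) = (\<integral>\<^sup>+x. h2 x \<partial>distr M M \<theta>)"
    by (rule nn_integral_distr[symmetric]) (use h2m in auto)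
  also have "\<dots> = (\<integral>\<^sup>+x. h2 x \<partial>M)" by (simp add: distr_eq)
  also have "(\<integral>\<^sup>+x. h1 x \<partial>M) + (\<integral>\<^sup>+x. h2 x \<partial>M) = (\<integral>\<^sup>+x. h1 x + h2 x \<partial>M)"
    by (rule nn_integral_add[symmetric]) (use h1m h2m in auto)
  also have "\<dots> = (\<integral>\<^sup>+x. emeasure lborel (Pair x -` E) \<partial>M)"
  proof (rule nn_integral_cong)
    fix x assume x: "x \<in> space M"
    have "Pair x -` E = Pair x -` E1 \<union> Pair x -` E2" using x by (auto simp: E1_def E2_def)
    moreover have "Pair x -` E1 \<inter> Pair x -` E2 = {}" by (auto simp: E1_def E2_def)
    ultimately show "h1 x + h2 x = emeasure lborel (Pair x -` E)"
      unfolding h1_def h2_def using sets_Pair1[OF E1s, of x] sets_Pair1[OF E2s, of x]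
      by (simp add: plus_emeasure)
  qed
  also have "\<dots> = emeasure N E" by (rule lborel.emeasure_pair_measure_alt[OF E(1), symmetric])
  finally show ?thesis using FF Fs by simp
qed

lemma flow_0: "p \<in> \<Omega> \<Longrightarrow> sf_flow \<theta> \<phi> 0 p = p"
  by (auto simp: \<Omega>_def sf_space_def sf_flow_def)

lemma flow_set_add:
  assumes "0 \<le> a" "0 \<le> b"
  shows "{p \<in> \<Omega>. sf_flow \<theta> \<phi> (a + b) p \<in> E} = {p \<in> \<Omega>. sf_flow \<theta> \<phi> a p \<in> {q \<in> \<Omega>. sf_flow \<theta> \<phi> b q \<in> E}}"
  using flow_in[OF _ assms(1)] flow_add[OF _ assms] by auto

lemma inv_k:
  assumes d: "0 \<le> d" "d < c" and E: "E \<in> sets N" "E \<subseteq> \<Omega>"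
  shows "{p \<in> \<Omega>. sf_flow \<theta> \<phi> (real k * d) p \<in> E} \<in> sets N \<and>
         emeasure N {p \<in> \<Omega>. sf_flow \<theta> \<phi> (real k * d) p \<in> E} = emeasure N E"
proof (induct k)
  case 0
  have "{p \<in> \<Omega>. sf_flow \<theta> \<phi> (real 0 * d) p \<in> E} = E" using E(2) flow_0 by auto
  then show ?case using E by simp
next
  case (Suc k)
  define G where "G = {q \<in> \<Omega>. sf_flow \<theta> \<phi> (real k * d) q \<in> E}"
  have "{p \<in> \<Omega>. sf_flow \<theta> \<phi> (real (Suc k) * d) p \<in> E} = {p \<in> \<Omega>. sf_flow \<theta> \<phi> d p \<in> G}"
    unfolding G_def using flow_set_add[of d "real k * d" E] d by (simp add: algebra_simps)
  moreover have "G \<in> sets N" "G \<subseteq> \<Omega>" "emeasure N G = emeasure N E" using Suc by (auto simp: G_def)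
  ultimately show ?case using small_inv[of G d] d by simp
qed

lemma INV:
  assumes r: "0 \<le> r" and E: "E \<in> sets N" "E \<subseteq> \<Omega>"
  shows "{p \<in> \<Omega>. sf_flow \<theta> \<phi> r p \<in> E} \<in> sets N \<and>
         emeasure N {p \<in> \<Omega>. sf_flow \<theta> \<phi> r p \<in> E} = emeasure N E"
proof -
  define n :: nat where "n = nat \<lceil>r / c\<rceil> + 1"
  have n0: "real n > 0" by (simp add: n_def)
  have "r / c < real n" unfolding n_def by linarith
  then have "r < real n * c" using c_pos by (simp add: field_simps)
  then have dc: "r / real n < c" using n0 by (simp add: field_simps)
  have d0: "0 \<le> r / real n" using r n0 by simp
  have "real n * (r / real n) = r" using n0 by simp
  then show ?thesis using inv_k[OF d0 dc E, of n] by simp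
qed

lemma Omega_space: "\<Omega> \<inter> space N \<in> sets N"
  using Omega_sets sets.sets_into_space[OF Omega_sets] by (simp add: Int_absorb2)

lemma sfm_sets: "S \<in> sets (sf_measure M \<phi>) \<longleftrightarrow> S \<subseteq> \<Omega> \<and> S \<in> sets N"
  unfolding sf_measure_def \<Omega>_def[symmetric] by (rule sets_restrict_space_iff[OF Omega_space])

lemma sfm_em: "S \<subseteq> \<Omega> \<Longrightarrow> emeasure (sf_measure M \<phi>) S = emeasure N S"
  unfolding sf_measure_def \<Omega>_def[symmetric] by (rule emeasure_restrict_space[OF Omega_space])

lemma surv_eq: "survivors M \<theta> \<phi> A t = \<Omega> - sf_hit_before M \<theta> \<phi> t A"
  by (auto simp: survivors_def sf_hit_before_def sf_preimage_def \<Omega>_def)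

lemma surv_sets:
  assumes "is_hole M \<theta> \<phi> A" "0 \<le> t"
  shows "survivors M \<theta> \<phi> A t \<in> sets N" "survivors M \<theta> \<phi> A t \<subseteq> \<Omega>"
proof -
  have "sf_hit_before M \<theta> \<phi> t A \<in> sets N" using assms by (auto simp: is_hole_def sfm_sets)
  then show "survivors M \<theta> \<phi> A t \<in> sets N" unfolding surv_eq using Omega_sets by auto
qed (auto simp: survivors_def \<Omega>_def)

lemma surv_pre:
  assumes r: "0 \<le> r"
  shows "survivors M \<theta> \<phi> (sf_preimage M \<theta> \<phi> r A) t = {p \<in> \<Omega>. sf_flow \<theta> \<phi> r p \<in> survivors M \<theta> \<phi> A t}"
proof -
  have "sf_flow \<theta> \<phi> r (sf_flow \<theta> \<phi> \<tau> p) = sf_flow \<theta> \<phi> \<tau> (sf_flow \<theta> \<phi> r p)"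
    if "p \<in> \<Omega>" "0 \<le> \<tau>" for p \<tau>
    using flow_add[OF that(1) that(2) r] flow_add[OF that(1) r that(2)] by (simp add: add.commute)
  then show ?thesis using flow_in r
    by (auto simp: survivors_def sf_preimage_def \<Omega>_def[symmetric])
qed

lemma surv_hit:
  assumes r: "0 \<le> r" and t: "0 \<le> t"
  shows "survivors M \<theta> \<phi> (sf_hit_before M \<theta> \<phi> r A) t = survivors M \<theta> \<phi> A (t + r)"
proof (intro set_eqI iffI)
  fix p assume p: "p \<in> survivors M \<theta> \<phi> (sf_hit_before M \<theta> \<phi> r A) t"
  then have pO: "p \<in> \<Omega>" by (auto simp: survivors_def \<Omega>_def)
  show "p \<in> survivors M \<theta> \<phi> A (t + r)"
    unfolding survivors_def
  proof (intro CollectI conjI ballI)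
    show "p \<in> sf_space M \<phi>" using pO by (simp add: \<Omega>_def)
    fix \<tau> assume \<tau>: "\<tau> \<in> {0..t + r}"
    define \<tau>1 where "\<tau>1 = min \<tau> t"
    have h: "0 \<le> \<tau>1" "\<tau>1 \<le> t" "0 \<le> \<tau> - \<tau>1" "\<tau> - \<tau>1 \<le> r" using \<tau> t r by (auto simp: \<tau>1_def min_def)
    have e: "sf_flow \<theta> \<phi> \<tau> p = sf_flow \<theta> \<phi> (\<tau> - \<tau>1) (sf_flow \<theta> \<phi> \<tau>1 p)"
      using flow_add[OF pO h(1) h(3)] by simp
    have "sf_flow \<theta> \<phi> \<tau>1 p \<notin> sf_hit_before M \<theta> \<phi> r A" using p h by (auto simp: survivors_def)
    then show "sf_flow \<theta> \<phi> \<tau> p \<notin> A" using e h flow_in[OF pO h(1)]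
      by (auto simp: sf_hit_before_def sf_preimage_def \<Omega>_def)
  qed
next
  fix p assume p: "p \<in> survivors M \<theta> \<phi> A (t + r)"
  then have pO: "p \<in> \<Omega>" by (auto simp: survivors_def \<Omega>_def)
  show "p \<in> survivors M \<theta> \<phi> (sf_hit_before M \<theta> \<phi> r A) t"
    unfolding survivors_def
  proof (intro CollectI conjI ballI)
    show "p \<in> sf_space M \<phi>" using pO by (simp add: \<Omega>_def)
    fix \<tau> assume \<tau>: "\<tau> \<in> {0..t}"
    show "sf_flow \<theta> \<phi> \<tau> p \<notin> sf_hit_before M \<theta> \<phi> r A"
    proof
      assume "sf_flow \<theta> \<phi> \<tau> p \<in> sf_hit_before M \<theta> \<phi> r A"
      then obtain \<sigma> where \<sigma>: "\<sigma> \<in> {0..r}" "sf_flow \<theta> \<phi> \<sigma> (sf_flow \<theta> \<phi> \<tau> p) \<in> A"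
        by (auto simp: sf_hit_before_def sf_preimage_def)
      then have "sf_flow \<theta> \<phi> (\<tau> + \<sigma>) p \<in> A" using flow_add[OF pO, of \<tau> \<sigma>] \<tau> by auto
      moreover have "\<tau> + \<sigma> \<in> {0..t + r}" using \<tau> \<sigma> by auto
      ultimately show False using p by (auto simp: survivors_def)
    qed
  qed
qed

lemma survP_eq:
  assumes t: "0 \<le> t" and A: "A \<subseteq> \<Omega>"
  shows "survivors M \<theta> \<phi> {p \<in> \<Omega>. fst p \<in> fst ` A} t =
    {p \<in> \<Omega>. \<forall>n. bsum \<theta> \<phi> n (fst p) \<le> snd p + t \<longrightarrow> (\<theta>^^n) (fst p) \<notin> fst ` A}"
proof (intro set_eqI iffI)
  fix p assume p: "p \<in> survivors M \<theta> \<phi> {p \<in> \<Omega>. fst p \<in> fst ` A} t"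
  then have pO: "p \<in> \<Omega>" by (auto simp: survivors_def \<Omega>_def)
  obtain x s where ps: "p = (x, s)" and x: "x \<in> space M" and s: "0 \<le> s" "s < \<phi> x"
    using pO by (auto simp: \<Omega>_def sf_space_def)
  have "(\<theta>^^n) x \<notin> fst ` A" if n: "bsum \<theta> \<phi> n x \<le> s + t" for n
  proof
    assume inA: "(\<theta>^^n) x \<in> fst ` A"
    define \<tau> where "\<tau> = (if n = 0 then 0 else bsum \<theta> \<phi> n x - s)"
    have b1: "n \<noteq> 0 \<Longrightarrow> \<phi> x \<le> bsum \<theta> \<phi> n x" using bsum_mono[OF x, of "Suc 0" n] by (simp add: bsum_1)
    have \<tau>: "0 \<le> \<tau>" "\<tau> \<le> t" using b1 s t n by (auto simp: \<tau>_def)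
    have "bsum \<theta> \<phi> n x \<le> s + \<tau>" "s + \<tau> < bsum \<theta> \<phi> (Suc n) x"
      using s bsum_strict[OF x, of n "Suc n"] by (auto simp: \<tau>_def bsum_1)
    then have fl: "sf_flow \<theta> \<phi> \<tau> p = ((\<theta>^^n) x, s + \<tau> - bsum \<theta> \<phi> n x)"
      using CHAR[OF x s(1)] ps by simp
    have "sf_flow \<theta> \<phi> \<tau> p \<in> {p \<in> \<Omega>. fst p \<in> fst ` A}" using flow_in[OF pO \<tau>(1)] fl inA by simp
    then show False using p \<tau> by (auto simp: survivors_def)
  qed
  then show "p \<in> {p \<in> \<Omega>. \<forall>n. bsum \<theta> \<phi> n (fst p) \<le> snd p + t \<longrightarrow> (\<theta>^^n) (fst p) \<notin> fst ` A}"
    using pO ps by auto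
next
  fix p assume p: "p \<in> {p \<in> \<Omega>. \<forall>n. bsum \<theta> \<phi> n (fst p) \<le> snd p + t \<longrightarrow> (\<theta>^^n) (fst p) \<notin> fst ` A}"
  then have pO: "p \<in> \<Omega>" by auto
  obtain x s where ps: "p = (x, s)" and x: "x \<in> space M" and s: "0 \<le> s" "s < \<phi> x"
    using pO by (auto simp: \<Omega>_def sf_space_def)
  show "p \<in> survivors M \<theta> \<phi> {p \<in> \<Omega>. fst p \<in> fst ` A} t"
    unfolding survivors_def
  proof (intro CollectI conjI ballI)
    show "p \<in> sf_space M \<phi>" using pO by (simp add: \<Omega>_def)
    fix \<tau> assume \<tau>: "\<tau> \<in> {0..t}"
    obtain n where n: "bsum \<theta> \<phi> n x \<le> s + \<tau>" "s + \<tau> < bsum \<theta> \<phi> (Suc n) x" using EX[OF x, of "s+\<tau>"] s \<tau> by auto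
    have fl: "sf_flow \<theta> \<phi> \<tau> p = ((\<theta>^^n) x, s + \<tau> - bsum \<theta> \<phi> n x)" using CHAR[OF x s(1) n] ps by simp
    have "(\<theta>^^n) x \<notin> fst ` A" using p ps n \<tau> by auto
    then show "sf_flow \<theta> \<phi> \<tau> p \<notin> {p \<in> \<Omega>. fst p \<in> fst ` A}" using fl by simp
  qed
qed

lemma survP_sets:
  assumes t: "0 \<le> t" and A: "A \<subseteq> \<Omega>" and pA: "fst ` A \<in> sets M"
  shows "survivors M \<theta> \<phi> {p \<in> \<Omega>. fst p \<in> fst ` A} t \<in> sets N"
proof -
  have [measurable]: "Measurable.pred N (\<lambda>p. (\<theta>^^n) (fst p) \<in> fst ` A)" for n
    by (rule pred_sets2[OF pA]) (rule measurable_compose[OF measurable_fst measurable_compose_n[OF th_meas]])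
  have "{p \<in> \<Omega>. \<forall>n. bsum \<theta> \<phi> n (fst p) \<le> snd p + t \<longrightarrow> (\<theta>^^n) (fst p) \<notin> fst ` A} =
    {p \<in> space N. (0 \<le> snd p \<and> snd p < \<phi> (fst p)) \<and> (\<forall>n. bsum \<theta> \<phi> n (fst p) \<le> snd p + t \<longrightarrow> (\<theta>^^n) (fst p) \<notin> fst ` A)}"
    by (auto simp: \<Omega>_def sf_space_def space_pair_measure)
  also have "\<dots> \<in> sets N" by measurable
  finally show ?thesis using survP_eq[OF t A] by simp
qed

lemma survP_incl:
  assumes t: "0 \<le> t" and A: "A \<subseteq> \<Omega>" and C: "\<And>x. x \<in> space M \<Longrightarrow> \<phi> x \<le> C"
  shows "survivors M \<theta> \<phi> A (t + 2 * C) \<subseteq>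
    {p \<in> \<Omega>. sf_flow \<theta> \<phi> C p \<in> survivors M \<theta> \<phi> {p \<in> \<Omega>. fst p \<in> fst ` A} t}"
proof
  fix p assume p: "p \<in> survivors M \<theta> \<phi> A (t + 2 * C)"
  then have pO: "p \<in> \<Omega>" by (auto simp: survivors_def \<Omega>_def)
  obtain x s where ps: "p = (x, s)" and x: "x \<in> space M" and s: "0 \<le> s" "s < \<phi> x"
    using pO by (auto simp: \<Omega>_def sf_space_def)
  have C0: "0 \<le> C" using C[OF x] c_le[OF x] c_pos by linarith
  have "sf_flow \<theta> \<phi> \<tau> (sf_flow \<theta> \<phi> C p) \<notin> {p \<in> \<Omega>. fst p \<in> fst ` A}" if \<tau>: "0 \<le> \<tau>" "\<tau> \<le> t" for \<tau>
  proof
    assume inP: "sf_flow \<theta> \<phi> \<tau> (sf_flow \<theta> \<phi> C p) \<in> {p \<in> \<Omega>. fst p \<in> fst ` A}"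
    have e: "sf_flow \<theta> \<phi> \<tau> (sf_flow \<theta> \<phi> C p) = sf_flow \<theta> \<phi> (C + \<tau>) p" using flow_add[OF pO C0 \<tau>(1)] by simp
    obtain n where n: "bsum \<theta> \<phi> n x \<le> s + (C + \<tau>)" "s + (C + \<tau>) < bsum \<theta> \<phi> (Suc n) x"
      using EX[OF x, of "s + (C + \<tau>)"] s \<tau> C0 by auto
    have fl: "sf_flow \<theta> \<phi> (C + \<tau>) p = ((\<theta>^^n) x, s + (C + \<tau>) - bsum \<theta> \<phi> n x)" using CHAR[OF x s(1) n] ps by simp
    obtain s' where s': "((\<theta>^^n) x, s') \<in> A" using inP e fl by force
    then have s'b: "0 \<le> s'" "s' < \<phi> ((\<theta>^^n) x)" using A by (auto simp: \<Omega>_def sf_space_def)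
    have Cn: "\<phi> ((\<theta>^^n) x) \<le> C" using C[OF it_space[OF x]] by simp
    have "n \<noteq> 0"
    proof
      assume "n = 0" then show False using n s \<tau> C[OF x] by (simp add: bsum_1)
    qed
    then have b1: "\<phi> x \<le> bsum \<theta> \<phi> n x" using bsum_mono[OF x, of "Suc 0" n] by (simp add: bsum_1)
    define \<tau>' where "\<tau>' = bsum \<theta> \<phi> n x - s + s'"
    have hh: "bsum \<theta> \<phi> n x \<le> s + \<tau>'" "s + \<tau>' < bsum \<theta> \<phi> (Suc n) x" using s'b by (auto simp: \<tau>'_def bsum_Suc)
    have "sf_flow \<theta> \<phi> \<tau>' p = ((\<theta>^^n) x, s + \<tau>' - bsum \<theta> \<phi> n x)" using CHAR[OF x s(1) hh] ps by simp
    then have "sf_flow \<theta> \<phi> \<tau>' p = ((\<theta>^^n) x, s')" by (simp add: \<tau>'_def)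
    moreover have "\<tau>' \<in> {0..t + 2 * C}" using b1 s s'b Cn n \<tau> by (auto simp: \<tau>'_def)
    moreover have "\<forall>\<tau>\<in>{0..t + 2 * C}. sf_flow \<theta> \<phi> \<tau> p \<notin> A" using p by (auto simp: survivors_def)
    ultimately show False using s' by metis
  qed
  then show "p \<in> {p \<in> \<Omega>. sf_flow \<theta> \<phi> C p \<in> survivors M \<theta> \<phi> {p \<in> \<Omega>. fst p \<in> fst ` A} t}"
    using pO flow_in[OF pO C0] by (auto simp: survivors_def \<Omega>_def)
qed

end

lemma eln_mono: "a \<le> b \<Longrightarrow> eln a \<le> eln b"
proof -
  assume ab: "a \<le> b"
  show ?thesis
  proof (cases "a = 0 \<or> b = \<top>")
    case True then show ?thesis by (auto simp: eln_def)
  next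
    case False
    then have a: "a \<noteq> 0" "a \<noteq> \<top>" and b: "b \<noteq> 0" "b \<noteq> \<top>" using ab top.extremum_unique by (auto simp: top_unique)
    have "enn2real a \<le> enn2real b" using ab b by (simp add: enn2real_mono top.not_eq_extremum)
    moreover have "0 < enn2real a" using a by (simp add: enn2real_positive_iff zero_less_iff_neq_zero top.not_eq_extremum)
    ultimately show ?thesis using a b by (simp add: eln_def)
  qed
qed

lemma shift_lim:
  fixes l :: "real \<Rightarrow> ereal"
  assumes L: "((\<lambda>t. l t / ereal t) \<longlongrightarrow> L) at_top" and d: "0 \<le> d"
  shows "((\<lambda>t. l (t + d) / ereal t) \<longlongrightarrow> L) at_top"
proof -
  have lim1: "filterlim (\<lambda>t::real. t + d) at_top at_top"
    by (rule filterlim_tendsto_add_at_top[OF tendsto_const filterlim_ident, of d, simplified add.commute]) 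
  have 1: "((\<lambda>t. l (t + d) / ereal (t + d)) \<longlongrightarrow> L) at_top"
    using filterlim_compose[OF L lim1] by (simp add: o_def)
  have "((\<lambda>t::real. 1 + d / t) \<longlongrightarrow> 1 + 0) at_top"
    by (intro tendsto_add tendsto_const tendsto_divide_0[OF tendsto_const] filterlim_at_top_imp_at_infinity filterlim_ident)
  then have "((\<lambda>t::real. 1 + d / t) \<longlongrightarrow> 1) at_top" by simp
  moreover have "\<forall>\<^sub>F t in at_top. 1 + d / t = (t + d) / (t::real)"
    using eventually_gt_at_top[of 0] by (rule eventually_mono) (simp add: field_simps)
  ultimately have "((\<lambda>t::real. (t + d) / t) \<longlongrightarrow> 1) at_top"
    by (rule Lim_transform_eventually)
  then have 2: "((\<lambda>t. ereal ((t + d) / t)) \<longlongrightarrow> ereal 1) at_top" by (simp add: lim_ereal)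
  have "((\<lambda>t. l (t + d) / ereal (t + d) * ereal ((t + d) / t)) \<longlongrightarrow> L * ereal 1) at_top"
    by (rule tendsto_mult_ereal[OF 1 2]) auto
  then have 3: "((\<lambda>t. l (t + d) / ereal (t + d) * ereal ((t + d) / t)) \<longlongrightarrow> L) at_top"
    by (simp add: one_ereal_def[symmetric])
  have ev: "\<forall>\<^sub>F t in at_top. l (t + d) / ereal (t + d) * ereal ((t + d) / t) = l (t + d) / ereal t"
    using eventually_gt_at_top[of 0]
  proof (rule eventually_mono)
    fix t :: real assume t: "0 < t"
    have "ereal (inverse (t + d)) * ereal ((t + d) / t) = ereal (inverse t)" using t d by (simp add: field_simps)
    then show "l (t + d) / ereal (t + d) * ereal ((t + d) / t) = l (t + d) / ereal t"
      using t d by (simp add: divide_ereal_def mult.assoc)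
  qed
  show ?thesis using Lim_transform_eventually[OF 3 ev] .
qed

lemma esc_mono_aux: "0 < t \<Longrightarrow> a \<le> b \<Longrightarrow> - eln b / ereal t \<le> - eln a / ereal t"
  using eln_mono[of a b] by (intro ereal_divide_right_mono) auto

theorem proposition3p5:
  fixes M :: "'a measure" and \<theta> :: "'a \<Rightarrow> 'a" and \<phi> :: "'a \<Rightarrow> real"
    and A B :: "('a \<times> real) set"
  assumes "prob_space M"
    and "mp_endo M \<theta>"
    and "ceiling_fun M \<phi>"
    and "is_hole M \<theta> \<phi> A"
    and "is_hole M \<theta> \<phi> B"
  shows
    "(A \<subseteq> B \<and> esc_exists M \<theta> \<phi> A \<and> esc_exists M \<theta> \<phi> B
        \<longrightarrow> esc_rate M \<theta> \<phi> A \<le> esc_rate M \<theta> \<phi> B)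
     \<and> (\<forall>r\<ge>0. esc_exists M \<theta> \<phi> A \<and> esc_exists M \<theta> \<phi> (sf_preimage M \<theta> \<phi> r A)
        \<longrightarrow> esc_rate M \<theta> \<phi> A = esc_rate M \<theta> \<phi> (sf_preimage M \<theta> \<phi> r A))
     \<and> (\<forall>r\<ge>0. esc_exists M \<theta> \<phi> A \<and> esc_exists M \<theta> \<phi> (sf_hit_before M \<theta> \<phi> r A)
        \<longrightarrow> esc_rate M \<theta> \<phi> A = esc_rate M \<theta> \<phi> (sf_hit_before M \<theta> \<phi> r A))
     \<and> ((\<exists>C. \<forall>x\<in>space M. \<phi> x \<le> C) \<and> fst ` A \<in> sets M
        \<and> esc_exists M \<theta> \<phi> A
        \<and> esc_exists M \<theta> \<phi> {p \<in> sf_space M \<phi>. fst p \<in> fst ` A}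
        \<longrightarrow> esc_rate M \<theta> \<phi> {p \<in> sf_space M \<phi>. fst p \<in> fst ` A} = esc_rate M \<theta> \<phi> A)"
proof -
  obtain c where c: "c > 0" "\<And>x. x \<in> space M \<Longrightarrow> c \<le> \<phi> x" and phim: "\<phi> \<in> borel_measurable M"
    using assms(3) by (auto simp: ceiling_fun_def)
  have thmeas: "\<theta> \<in> measurable M M" and de: "distr M M \<theta> = M" using assms(2) by (auto simp: mp_endo_def)
  interpret SF M \<theta> \<phi> c using c phim thmeas de by unfold_locales auto
  define m where "m X t = emeasure (sf_measure M \<phi>) (survivors M \<theta> \<phi> X t)" for X t
  have ef: "esc_fun M \<theta> \<phi> X t = - eln (m X t) / ereal t" for X t by (simp add: esc_fun_def m_def)
  have sO: "survivors M \<theta> \<phi> X t \<subseteq> \<Omega>" for X t by (auto simp: survivors_def \<Omega>_def)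
  have mN: "m X t = emeasure N (survivors M \<theta> \<phi> X t)" for X t unfolding m_def by (rule sfm_em[OF sO])
  have AO: "A \<subseteq> \<Omega>" using assms(4) by (auto simp: is_hole_def sfm_sets)
  have limA: "(esc_fun M \<theta> \<phi> A \<longlongrightarrow> esc_rate M \<theta> \<phi> A) at_top" if "esc_exists M \<theta> \<phi> A"
    using that unfolding esc_rate_def esc_exists_def upper_esc_def lower_esc_def
    by (intro tendsto_Limsup) auto
  have P1: "esc_rate M \<theta> \<phi> A \<le> esc_rate M \<theta> \<phi> B" if AB: "A \<subseteq> B"
    unfolding esc_rate_def upper_esc_def
  proof (rule Limsup_mono)
    show "\<forall>\<^sub>F t in at_top. esc_fun M \<theta> \<phi> A t \<le> esc_fun M \<theta> \<phi> B t"
      using eventually_gt_at_top[of "0::real"]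
    proof (rule eventually_mono)
      fix t :: real assume t: "0 < t"
      have "survivors M \<theta> \<phi> B t \<subseteq> survivors M \<theta> \<phi> A t" using AB by (auto simp: survivors_def)
      then have "m B t \<le> m A t" unfolding mN using surv_sets[OF assms(4)] t by (intro emeasure_mono) auto
      then show "esc_fun M \<theta> \<phi> A t \<le> esc_fun M \<theta> \<phi> B t" unfolding ef by (rule esc_mono_aux[OF t])
    qed
  qed
  have P2: "esc_rate M \<theta> \<phi> A = esc_rate M \<theta> \<phi> (sf_preimage M \<theta> \<phi> r A)" if r: "0 \<le> r" for r
  proof -
    have eq: "esc_fun M \<theta> \<phi> (sf_preimage M \<theta> \<phi> r A) t = esc_fun M \<theta> \<phi> A t" if t: "0 \<le> t" for t
    proof -
      have "m (sf_preimage M \<theta> \<phi> r A) t = emeasure N {p \<in> \<Omega>. sf_flow \<theta> \<phi> r p \<in> survivors M \<theta> \<phi> A t}"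
        unfolding mN surv_pre[OF r] ..
      also have "\<dots> = m A t" unfolding mN using INV[OF r surv_sets[OF assms(4) t]] by simp
      finally show ?thesis unfolding ef by simp
    qed
    show ?thesis unfolding esc_rate_def upper_esc_def
      by (intro antisym Limsup_mono; rule eventually_mono[OF eventually_ge_at_top[of "0::real"]]) (simp_all add: eq)
  qed
  have P3: "esc_rate M \<theta> \<phi> A = esc_rate M \<theta> \<phi> (sf_hit_before M \<theta> \<phi> r A)"
    if r: "0 \<le> r" and ex: "esc_exists M \<theta> \<phi> A" for r
  proof -
    have "((\<lambda>t. - eln (m A t) / ereal t) \<longlongrightarrow> esc_rate M \<theta> \<phi> A) at_top" using limA[OF ex] by (simp add: ef[abs_def])
    from shift_lim[OF this r] have 1: "((\<lambda>t. - eln (m A (t + r)) / ereal t) \<longlongrightarrow> esc_rate M \<theta> \<phi> A) at_top" .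
    have "\<forall>\<^sub>F t in at_top. - eln (m A (t + r)) / ereal t = esc_fun M \<theta> \<phi> (sf_hit_before M \<theta> \<phi> r A) t"
      using eventually_ge_at_top[of "0::real"] by (rule eventually_mono) (simp add: ef m_def surv_hit[OF r])
    from Lim_transform_eventually[OF 1 this] show ?thesis unfolding esc_rate_def upper_esc_def
      by (intro lim_imp_Limsup[symmetric]) auto
  qed
  have P4: "esc_rate M \<theta> \<phi> {p \<in> sf_space M \<phi>. fst p \<in> fst ` A} = esc_rate M \<theta> \<phi> A"
    if C: "\<And>x. x \<in> space M \<Longrightarrow> \<phi> x \<le> C" and pA: "fst ` A \<in> sets M" and ex: "esc_exists M \<theta> \<phi> A" for C
  proof -
    define P where "P = {p \<in> \<Omega>. fst p \<in> fst ` A}"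
    have P_eq: "{p \<in> sf_space M \<phi>. fst p \<in> fst ` A} = P" by (simp add: P_def \<Omega>_def)
    obtain x0 where "x0 \<in> space M" using prob_space.not_empty[OF assms(1)] by auto
    then have C0: "0 \<le> C" using C c by (meson less_le_trans linorder_not_le order.strict_implies_order)
    have AP: "A \<subseteq> P" using AO by (auto simp: P_def)
    have bounds: "m A (t + 2 * C) \<le> m P t \<and> m P t \<le> m A t" if t: "0 \<le> t" for t
    proof
      have sP: "survivors M \<theta> \<phi> P t \<in> sets N" unfolding P_def by (rule survP_sets[OF t AO pA])
      have "m A (t + 2 * C) \<le> emeasure N {p \<in> \<Omega>. sf_flow \<theta> \<phi> C p \<in> survivors M \<theta> \<phi> P t}"
        unfolding mN using survP_incl[OF t AO C] INV[OF C0 sP sO] unfolding P_def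
        by (intro emeasure_mono) auto
      also have "\<dots> = m P t" unfolding mN using INV[OF C0 sP sO] by simp
      finally show "m A (t + 2 * C) \<le> m P t" .
      have "survivors M \<theta> \<phi> P t \<subseteq> survivors M \<theta> \<phi> A t" using AP by (auto simp: survivors_def)
      then show "m P t \<le> m A t" unfolding mN using surv_sets[OF assms(4) t] by (intro emeasure_mono) auto
    qed
    have lA: "((\<lambda>t. - eln (m A t) / ereal t) \<longlongrightarrow> esc_rate M \<theta> \<phi> A) at_top" using limA[OF ex] by (simp add: ef[abs_def])
    have lA2: "((\<lambda>t. - eln (m A (t + 2 * C)) / ereal t) \<longlongrightarrow> esc_rate M \<theta> \<phi> A) at_top"
      using shift_lim[OF lA] C0 by simp
    have "((\<lambda>t. - eln (m P t) / ereal t) \<longlongrightarrow> esc_rate M \<theta> \<phi> A) at_top"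
    proof (rule tendsto_sandwich[OF _ _ lA lA2])
      show "\<forall>\<^sub>F t in at_top. - eln (m A t) / ereal t \<le> - eln (m P t) / ereal t"
        using eventually_gt_at_top[of "0::real"]
      proof (rule eventually_mono)
        fix t :: real assume t: "0 < t"
        show "- eln (m A t) / ereal t \<le> - eln (m P t) / ereal t"
          by (rule esc_mono_aux[OF t]) (use bounds[of t] t in auto)
      qed
      show "\<forall>\<^sub>F t in at_top. - eln (m P t) / ereal t \<le> - eln (m A (t + 2 * C)) / ereal t"
        using eventually_gt_at_top[of "0::real"]
      proof (rule eventually_mono)
        fix t :: real assume t: "0 < t"
        show "- eln (m P t) / ereal t \<le> - eln (m A (t + 2 * C)) / ereal t"
          by (rule esc_mono_aux[OF t]) (use bounds[of t] t in auto)
      qed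
    qed
    then show ?thesis unfolding P_eq esc_rate_def upper_esc_def
      by (intro lim_imp_Limsup) (auto simp: ef[abs_def])
  qed
  show ?thesis using P1 P2 P3 P4 by blast
qed

end
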